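(* If $G$ is a finite non-cyclic group of prime power order with $\psi'(G)>\frac{19}{43}$, then $G$ is a $2$-group.
   Context: For a finite group $G$, $\psi(G)=\sum_{x\in G} o(x)$ and $\psi'(G)=\psi(G)/\psi(\mathcal{C}_{|G|})$, where $\mathcal{C}_n$ is the cyclic group of order $n$. *)

theory Defs
  imports "HOL-Algebra.Algebra"
begin

definition psi :: "('a, 'b) monoid_scheme \<Rightarrow> nat" where
  "psi G = (\<Sum>x\<in>carrier G. group.ord G x)"

text \<open>psi'(G) = psi(G) / psi(C_|G|), with C_n realised as the additive group of integers mod n.\<close>
definition psi' :: "('a, 'b) monoid_scheme \<Rightarrow> real" where
  "psi' G = real (psi G) / real (psi (integer_mod_group (order G)))"

end

theory Submission imports Defs "HOL-Computational_Algebra.Primes" begin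

lemma arith_final:
  fixes p q :: nat
  assumes "p \<ge> 3"
  shows "43*(q*q + (p*p*q - q)*(p*q)) \<le> 19*((p*p*q - p*q)*(p*p*q) + (p*q - q)*(p*q))"
proof -
  obtain t where t: "p = t + 3" using assms by (metis add.commute le_Suc_ex)
  have e1: "p*p*q - q = (t*t + 6*t + 8)*q" unfolding t by (simp add: algebra_simps)
  have e2: "p*p*q - p*q = (t*t+5*t+6)*q" unfolding t by (simp add: algebra_simps)
  have e3: "p*q - q = (t+2)*q" unfolding t by (simp add: algebra_simps)
  show ?thesis unfolding e1 e2 e3 unfolding t by (simp add: algebra_simps)
qed

lemma ord_eq_order_cyclic:
  fixes G (structure)
  assumes "group G" "finite (carrier G)" "x \<in> carrier G" "group.ord G x = order G"
  shows "cyclic_group G"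
proof -
  interpret group G by fact
  have sub: "generate G {x} \<subseteq> carrier G" using assms(3) generate_incl by blast
  have "card (generate G {x}) = card (carrier G)"
    using generate_pow_card[OF assms(3)] assms(4) by (simp add: order_def)
  then have "generate G {x} = carrier G"
    using sub assms(2) card_subset_eq by blast
  then have "carrier G = range (\<lambda>n::int. x [^] n)"
    using generate_pow[OF assms(3)] by (simp add: full_SetCompr_eq)
  then show ?thesis using cyclic_group assms(3) by blast
qed

lemma card_ndvd:
  fixes p m :: nat
  assumes "p > 0" "m \<ge> 1"
  shows "card {a\<in>{..<p^m}. \<not> p dvd a} = p^m - p^(m-1)"
proof -
  have pm: "p^m = p * p^(m-1)" using assms by (metis Suc_diff_le diff_Suc_1 power_Suc)
  have D: "{a\<in>{..<p^m}. p dvd a} = (\<lambda>b. p*b) ` {..<p^(m-1)}"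
  proof
    show "{a\<in>{..<p^m}. p dvd a} \<subseteq> (\<lambda>b. p*b) ` {..<p^(m-1)}"
    proof
      fix a assume "a \<in> {a\<in>{..<p^m}. p dvd a}"
      then obtain b where "a = p*b" "p*b < p * p^(m-1)" using pm by auto
      then show "a \<in> (\<lambda>b. p*b) ` {..<p^(m-1)}" by auto
    qed
    show "(\<lambda>b. p*b) ` {..<p^(m-1)} \<subseteq> {a\<in>{..<p^m}. p dvd a}"
      using pm assms(1) by auto
  qed
  have cD: "card {a\<in>{..<p^m}. p dvd a} = p^(m-1)"
    unfolding D using assms(1) by (subst card_image) (auto simp: inj_on_def)
  have "card {a\<in>{..<p^m}. \<not> p dvd a} + card {a\<in>{..<p^m}. p dvd a} = card {..<p^m}"
  proof -
    have "{a\<in>{..<p^m}. \<not> p dvd a} \<union> {a\<in>{..<p^m}. p dvd a} = {..<p^m}" by auto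
    then show ?thesis by (subst card_Un_disjoint[symmetric]) auto
  qed
  then show ?thesis using cD by simp
qed

lemma psi_C_lower:
  fixes p k :: nat
  assumes p: "Factorial_Ring.prime p" and k: "k \<ge> 2"
  shows "psi (integer_mod_group (p^k)) \<ge> (p^k - p^(k-1))*p^k + (p^(k-1) - p^(k-2))*p^(k-1)"
proof -
  define n where "n = p^k"
  define Z where "Z = integer_mod_group n"
  interpret Z: group Z unfolding Z_def by simp
  have p0: "p > 0" using p prime_gt_0_nat by blast
  have n0: "n > 0" unfolding n_def using p0 by simp
  have carr: "carrier Z = {0..<int n}" unfolding Z_def carrier_integer_mod_group using n0 by simp
  have fin: "finite (carrier Z)" using carr by simp
  have ordge: "Z.ord (int a) \<ge> 1" if "a < n" for a
    using Z.ord_ge_1[OF fin] that carr by simp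
  have dv: "n dvd Z.ord (int a) * a" if "a < n" for a
  proof -
    have "int a \<in> carrier Z" using that carr by simp
    then have "pow Z (int a) (Z.ord (int a)) = \<one>\<^bsub>Z\<^esub>" by simp
    then have "(int (Z.ord (int a)) * int a) mod int n = 0" unfolding Z_def by simp
    then have "int n dvd int (Z.ord (int a) * a)" by (simp add: mod_eq_0_iff_dvd)
    then show ?thesis by (simp only: of_nat_dvd_iff)
  qed
  have psiZ: "psi Z = (\<Sum>a\<in>{..<n}. Z.ord (int a))"
  proof -
    have "carrier Z = int ` {..<n}" unfolding carr
      by (auto simp: image_iff intro!: bexI[where x="nat _"])
    then show ?thesis unfolding psi_def by (simp add: sum.reindex)
  qed
  define A1 where "A1 = {a\<in>{..<p^k}. \<not> p dvd a}"
  define A2 where "A2 = (\<lambda>b. p*b) ` {b\<in>{..<p^(k-1)}. \<not> p dvd b}"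
  have pk: "p^k = p * p^(k-1)" using k by (metis Suc_diff_le diff_Suc_1 le_trans one_le_numeral power_Suc)
  have cA1: "card A1 = p^k - p^(k-1)" unfolding A1_def using card_ndvd[OF p0] k by simp
  have cA2: "card A2 = p^(k-1) - p^(k-2)" unfolding A2_def using card_ndvd[OF p0, of "k-1"] k p0
    by (subst card_image) (auto simp: inj_on_def diff_diff_add numeral_2_eq_2)
  have sub: "A1 \<union> A2 \<subseteq> {..<n}" unfolding A1_def A2_def n_def using pk p0 by auto
  have disj: "A1 \<inter> A2 = {}" unfolding A1_def A2_def by auto
  have fA: "finite A1" "finite A2" unfolding A1_def A2_def by auto
  have b1: "Z.ord (int a) \<ge> p^k" if "a \<in> A1" for a
  proof -
    have an: "a < n" and np: "\<not> p dvd a" using that unfolding A1_def n_def by auto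
    have "coprime (p^k) a" using np p by (simp add: prime_imp_coprime)
    then have "p^k dvd Z.ord (int a)" using dv[OF an] unfolding n_def
      using coprime_dvd_mult_left_iff by blast
    then show ?thesis using ordge[OF an] by (simp add: dvd_imp_le)
  qed
  have b2: "Z.ord (int a) \<ge> p^(k-1)" if aA: "a \<in> A2" for a
  proof -
    obtain b where ab: "a = p*b" and bl: "b < p^(k-1)" and np: "\<not> p dvd b" using aA unfolding A2_def by blast
    have an: "a < n" using ab bl pk p0 unfolding n_def by simp
    have "p * p^(k-1) dvd p * (Z.ord (int a) * b)" using dv[OF an] unfolding n_def pk ab
      by (simp add: ac_simps)
    then have d1: "p^(k-1) dvd Z.ord (int a) * b" using p0 by simp
    have "coprime (p^(k-1)) b" using np p by (simp add: prime_imp_coprime)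
    then have "p^(k-1) dvd Z.ord (int a)" using d1 coprime_dvd_mult_left_iff by blast
    then show ?thesis using ordge[OF an] by (simp add: dvd_imp_le)
  qed
  have "(p^k - p^(k-1))*p^k + (p^(k-1) - p^(k-2))*p^(k-1) = (\<Sum>a\<in>A1. p^k) + (\<Sum>a\<in>A2. p^(k-1))"
    using cA1 cA2 by simp
  also have "\<dots> \<le> (\<Sum>a\<in>A1. Z.ord (int a)) + (\<Sum>a\<in>A2. Z.ord (int a))"
    using b1 b2 by (intro add_mono sum_mono) auto
  also have "\<dots> = (\<Sum>a\<in>A1 \<union> A2. Z.ord (int a))"
    using fA disj by (simp add: sum.union_disjoint)
  also have "\<dots> \<le> (\<Sum>a\<in>{..<n}. Z.ord (int a))"
    using sub by (intro sum_mono2) auto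
  finally show ?thesis using psiZ unfolding Z_def n_def by simp
qed

lemma psi_G_upper:
  fixes G (structure) and p k :: nat
  assumes grp: "group G" and fin: "finite (carrier G)" and p: "Factorial_Ring.prime p"
    and k: "k \<ge> 2" and ord: "order G = p^k"
    and ords: "\<And>x. x \<in> carrier G \<Longrightarrow> \<exists>i<k. group.ord G x = p^i"
  shows "psi G \<le> p^(k-2)*p^(k-2) + (p^k - p^(k-2))*p^(k-1)"
proof -
  interpret group G by fact
  have p0: "p > 1" using p prime_gt_1_nat by blast
  have le1: "ord x \<le> p^(k-1)" if "x \<in> carrier G" for x
    using ords[OF that] p0 by (auto intro: power_increasing)
  obtain T where T: "T \<subseteq> carrier G" "card T = p^(k-2)" "\<And>y. y \<in> T \<Longrightarrow> ord y \<le> p^(k-2)"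
  proof (cases "\<exists>x\<in>carrier G. ord x = p^(k-1)")
    case True
    then obtain x where x: "x \<in> carrier G" "ord x = p^(k-1)" by blast
    define z where "z = x [^] p"
    have z: "z \<in> carrier G" unfolding z_def using x by simp
    obtain j where kj: "k = Suc (Suc j)" using k by (metis add_2_eq_Suc le_Suc_ex)
    have pk1: "p^(k-1) = p^(k-2) * p" by (simp add: kj)
    have "gcd (p^(k-1)) p = p" unfolding pk1 by simp
    then have oz: "ord z = p^(k-2)" unfolding z_def using ord_pow_gen[OF x(1), of p] x(2) p0 pk1 by simp
    show ?thesis
    proof (rule that)
      show "generate G {z} \<subseteq> carrier G" using z generate_incl by blast
      show "card (generate G {z}) = p^(k-2)" using generate_pow_card[OF z] oz by simp
      fix y assume "y \<in> generate G {z}"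
      then obtain n :: nat where "y = z [^] n" using generate_pow_on_finite_carrier[OF fin z] by blast
      then show "ord y \<le> p^(k-2)" using ord_pow_gen[OF z, of n] oz p0 by (auto simp: Suc_le_eq)
    qed
  next
    case False
    have le2: "ord x \<le> p^(k-2)" if xc: "x \<in> carrier G" for x
    proof -
      obtain i where "i < k" "ord x = p^i" using ords[OF xc] by blast
      moreover have "i \<noteq> k-1" using False xc \<open>ord x = p^i\<close> by blast
      ultimately have "i \<le> k-2" by linarith
      then show ?thesis using \<open>ord x = p^i\<close> p0 by (auto intro: power_increasing)
    qed
    have "p^(k-2) \<le> p^k" using p0 by (intro power_increasing) auto
    then have "p^(k-2) \<le> card (carrier G)" using ord unfolding order_def by simp
    then obtain T where "T \<subseteq> carrier G" "card T = p^(k-2)" using obtain_subset_with_card_n by metis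
    then show ?thesis using that le2 by blast
  qed
  have fT: "finite T" using T(1) fin finite_subset by blast
  have cT: "card (carrier G - T) = p^k - p^(k-2)" using T fin ord unfolding order_def
    by (simp add: card_Diff_subset fT)
  have "psi G = (\<Sum>x\<in>T. ord x) + (\<Sum>x\<in>carrier G - T. ord x)"
    unfolding psi_def using T(1) fin by (metis sum.subset_diff add.commute)
  also have "\<dots> \<le> card T * p^(k-2) + card (carrier G - T) * p^(k-1)"
  proof (rule add_mono)
    show "(\<Sum>x\<in>T. ord x) \<le> card T * p^(k-2)"
      using sum_bounded_above[of T ord "p^(k-2)"] T(3) by simp
    show "(\<Sum>x\<in>carrier G - T. ord x) \<le> card (carrier G - T) * p^(k-1)"
      using sum_bounded_above[of "carrier G - T" ord "p^(k-1)"] le1 by simp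
  qed
  finally show ?thesis using T(2) cT by simp
qed

theorem corollary3p2:
  fixes G :: "('a, 'b) monoid_scheme"
  assumes "group G"
    and "finite (carrier G)"
    and "\<not> cyclic_group G"
    and "\<exists>p k. Factorial_Ring.prime (p::nat) \<and> order G = p ^ k"
    and "psi' G > 19 / 43"
  shows "\<exists>k. order G = 2 ^ k"
proof -
  interpret group G by fact
  obtain p k where p: "Factorial_Ring.prime (p::nat)" and ord: "order G = p ^ k" using assms(4) by blast
  show ?thesis
  proof (cases "p = 2")
    case True then show ?thesis using ord by blast
  next
    case False
    have "p \<ge> 2" using p prime_ge_2_nat by blast
    then have p3: "p \<ge> 3" using False by linarith
    have ords: "\<exists>i<k. ord x = p^i" if x: "x \<in> carrier G" for x
    proof -
      have "ord x dvd p^k" using ord_dvd_group_order[OF x] ord by simp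
      then obtain i where i: "i \<le> k" "ord x = p^i" using divides_primepow_nat[OF p] by blast
      have "ord x \<noteq> order G" using ord_eq_order_cyclic[OF assms(1,2) x] assms(3) by blast
      then have "i \<noteq> k" using i ord by auto
      then show ?thesis using i by (metis le_neq_implies_less)
    qed
    have k2: "k \<ge> 2"
    proof (rule ccontr)
      assume "\<not> k \<ge> 2"
      then have o1: "ord x = 1" if "x \<in> carrier G" for x using ords[OF that] by (auto simp: less_Suc_eq numeral_2_eq_2)
      have "carrier G \<subseteq> {\<one>\<^bsub>G\<^esub>}" using o1 ord_eq_1 by blast
      then have "card (carrier G) \<le> card {\<one>\<^bsub>G\<^esub>}" by (intro card_mono) auto
      then have "card (carrier G) \<le> 1" by simp
      moreover have "k \<noteq> 0" using ords[OF one_closed] by auto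
      then have "p^k \<ge> p^1" using p3 by (intro power_increasing) auto
      ultimately show False using ord p3 unfolding order_def by simp
    qed
    define q where "q = p^(k-2)"
    obtain j where kj: "k = Suc (Suc j)" using k2 by (metis add_2_eq_Suc le_Suc_ex)
    have e0: "p^k = p*p*q" unfolding q_def by (simp add: kj)
    have e1: "p^(k-1) = p*q" unfolding q_def by (simp add: kj)
    have e2: "p^(k-2) = q" unfolding q_def by simp
    have U: "psi G \<le> q*q + (p*p*q - q)*(p*q)"
      using psi_G_upper[OF assms(1,2) p k2 ord ords] by (simp only: e0 e1 e2)
    have L: "psi (integer_mod_group (order G)) \<ge> (p*p*q - p*q)*(p*p*q) + (p*q - q)*(p*q)"
      using psi_C_lower[OF p k2] by (simp only: ord e0 e1 e2)
    have A: "43 * psi G \<le> 19 * psi (integer_mod_group (order G))"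
    proof -
      have "43 * psi G \<le> 43*(q*q + (p*p*q - q)*(p*q))" using U by simp
      also have "\<dots> \<le> 19*((p*p*q - p*q)*(p*p*q) + (p*q - q)*(p*q))" by (rule arith_final[OF p3])
      also have "\<dots> \<le> 19 * psi (integer_mod_group (order G))" using L by simp
      finally show ?thesis .
    qed
    have qpos: "q > 0" unfolding q_def using p3 by simp
    have "(p*p*q - p*q)*(p*p*q) > 0" using qpos p3 by simp
    then have Cpos: "psi (integer_mod_group (order G)) > 0" using L by linarith
    have A': "43 * real (psi G) \<le> 19 * real (psi (integer_mod_group (order G)))"
      using A by (metis of_nat_le_iff of_nat_mult of_nat_numeral)
    have "psi' G \<le> 19/43" unfolding psi'_def using A' Cpos
      by (simp add: divide_simps)
    then show ?thesis using assms(5) by simp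
  qed
qed

end
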